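(* Let $f:\mathbb R^n\to\mathbb R$ be convex, differentiable and $L$-Lipschitz smooth, $g:\mathbb R^n\to\mathbb R\cup\{+\infty\}$ proper, closed and convex, $F=f+g$, and assume $F$ has a minimizer $\bar x$. Let $(B_k)_{k\ge0}\subseteq(0,\infty)$, $(\rho_k)_{k\ge0}\subseteq[0,\infty)$, $L_k=B_k+\rho_k$, and assume there are constants $L_{\max}\ge L_{\min}>0$ with $L_k\in[L_{\min},L_{\max}]$ for all $k$. Let $\alpha_0=1$ and, for $k\ge1$, let $\alpha_k\in(0,1]$ satisfy $1-\alpha_k=\frac{\alpha_k^2L_k}{\alpha_{k-1}^2L_{k-1}}$. Define $\beta_0=1$, $\beta_k=\prod_{i=1}^k\max\big(1-\alpha_i,\frac{\alpha_i^2L_i}{\alpha_{i-1}^2L_{i-1}}\big)$ for $k\ge1$, fix $\mathcal E_0>0$ and $p>1$, and let $\mathcal R_k(p)=\mathcal E_0\big(1+\sum_{l=1}^kl^{-p}\big)$. Given $x_{-1},x^\circ_{-1}\in\mathbb R^n$, let $(y_k,x_k,x^\circ_k)_{k\ge0}$ and $(\epsilon_k)_{k\ge0}$ satisfy for all $k\ge0$: $y_k=\alpha_kx^\circ_{k-1}+(1-\alpha_k)x_{k-1}$; $x_k\approx_{\epsilon_k}T_{L_k}(y_k)$; $D_f(x_k,y_k)\le\frac{B_k}2\|x_k-y_k\|^2$; $x^\circ_k=x_{k-1}+\alpha_k^{-1}(x_k-x_{k-1})$; where $\epsilon_0=\mathcal E_0$ and $\epsilon_k=\mathcal E_0\beta_kk^{-p}+\frac{\rho_k}2\|x_k-y_k\|^2$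 for $k\ge1$. Then for all $k\ge0$, $$F(x_k)-F(\bar x)+\frac{\alpha_k^2L_k}2\|\bar x-x^\circ_k\|^2\le\Big(1+\frac{k\sqrt{L_0}}{2\sqrt{L_{\max}}}\Big)^{-2}\Big(\frac{L_0}2\|\bar x-x^\circ_{-1}\|^2+\mathcal R_k(p)\Big).$$ In particular, since $\mathcal R_k(p)\le\mathcal E_0\big(1+\sum_{l\ge1}l^{-p}\big)<\infty$, $F(x_k)-F(\bar x)=\mathcal O(1/k^2)$.
   Context: $D_f(u,w)=f(u)-f(w)-\langle\nabla f(w),u-w\rangle$; $L$-Lipschitz smooth means $D_f(u,w)\le\frac L2\|u-w\|^2$ for all $u,w$. For proper $h$, $\epsilon\ge0$: $\partial_\epsilon h(\bar x)=\{v:\langle v,u-\bar x\rangle\le h(u)-h(\bar x)+\epsilon\ \forall u\}$ for $\bar x\in\operatorname{dom}h$, $\emptyset$ otherwise. $\tilde x\approx_\epsilon T_\rho(x)$ means $\mathbf 0\in\nabla f(x)-\rho(x-\tilde x)+\partial_\epsilon g(\tilde x)$. *)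

theory Defs
  imports "HOL-Analysis.Analysis" "HOL-Library.Extended_Real"
begin

definition bregman :: "('a::real_inner \<Rightarrow> real) \<Rightarrow> ('a \<Rightarrow> 'a) \<Rightarrow> 'a \<Rightarrow> 'a \<Rightarrow> real" where
  "bregman f grad u w = f u - f w - inner (grad w) (u - w)"

text \<open>L-Lipschitz smoothness in the Bregman form of the paper.\<close>
definition lipschitz_smooth :: "real \<Rightarrow> ('a::real_inner \<Rightarrow> real) \<Rightarrow> ('a \<Rightarrow> 'a) \<Rightarrow> bool" where
  "lipschitz_smooth L f grad \<longleftrightarrow> (\<forall>u w. bregman f grad u w \<le> L / 2 * (norm (u - w))\<^sup>2)"

definition proper_fun :: "('a \<Rightarrow> ereal) \<Rightarrow> bool" where
  "proper_fun h \<longleftrightarrow> (\<forall>x. h x \<noteq> -\<infinity>) \<and> (\<exists>x. h x \<noteq> \<infinity>)"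

definition epigraph_e :: "('a \<Rightarrow> ereal) \<Rightarrow> ('a \<times> real) set" where
  "epigraph_e h = {(x, r). h x \<le> ereal r}"

definition convex_fun_e :: "('a::real_vector \<Rightarrow> ereal) \<Rightarrow> bool" where
  "convex_fun_e h \<longleftrightarrow> convex (epigraph_e h)"

definition closed_fun_e :: "('a::topological_space \<Rightarrow> ereal) \<Rightarrow> bool" where
  "closed_fun_e h \<longleftrightarrow> closed (epigraph_e h)"

definition eps_subdiff :: "('a::real_inner \<Rightarrow> ereal) \<Rightarrow> real \<Rightarrow> 'a \<Rightarrow> 'a set" where
  "eps_subdiff h eps xb =
     (if h xb \<noteq> \<infinity> then
        {v. \<forall>u. ereal (inner v (u - xb)) \<le> h u - h xb + ereal eps}
      else {})"

text \<open>xt \<approx>_eps T_rho(x): 0 \<in> grad f(x) - rho (x - xt) + \<partial>_eps g(xt).\<close>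
definition inexact_prox :: "('a::real_inner \<Rightarrow> 'a) \<Rightarrow> ('a \<Rightarrow> ereal) \<Rightarrow> real \<Rightarrow> real \<Rightarrow> 'a \<Rightarrow> 'a \<Rightarrow> bool" where
  "inexact_prox grad g rho eps x xt \<longleftrightarrow>
     0 \<in> (\<lambda>v. grad x - rho *\<^sub>R (x - xt) + v) ` eps_subdiff g eps xt"

end

theory Submission imports Defs begin

lemma grad_ineq:
  fixes f :: "'a::euclidean_space \<Rightarrow> real"
  assumes cf: "convex_on UNIV f"
    and fg: "\<And>z. (f has_derivative (\<lambda>h. inner (grad z) h)) (at z)"
  shows "f c + inner (grad c) (x - c) \<le> f x"
proof -
  define \<phi> where "\<phi> = (\<lambda>t::real. f (c + t *\<^sub>R (x - c)))"
  have d1: "((\<lambda>t::real. c + t *\<^sub>R (x - c)) has_derivative (\<lambda>t. t *\<^sub>R (x - c))) (at 0)"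
    by (auto intro!: derivative_eq_intros)
  have "(\<phi> has_derivative (\<lambda>t. inner (grad c) (t *\<^sub>R (x - c)))) (at 0)"
  proof -
    have "(f has_derivative (\<lambda>h. inner (grad c) h)) (at (c + 0 *\<^sub>R (x - c)))" using fg[of c] by simp
    from has_derivative_compose[OF d1 this] show ?thesis unfolding \<phi>_def by simp
  qed
  hence "(\<phi> has_field_derivative (inner (grad c) (x - c))) (at 0 within UNIV)"
    unfolding has_field_derivative_def by (simp add: mult.commute[of _ "inner (grad c) (x - c)"])
  moreover have "convex_on UNIV \<phi>"
  proof (rule convex_onI)
    fix t u v :: real assume t: "0 < t" "t < 1"
    have "c + ((1 - t) * u + t * v) *\<^sub>R (x - c) = (1 - t) *\<^sub>R (c + u *\<^sub>R (x - c)) + t *\<^sub>R (c + v *\<^sub>R (x - c))"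
      by (simp add: algebra_simps)
    then show "\<phi> ((1 - t) *\<^sub>R u + t *\<^sub>R v) \<le> (1 - t) * \<phi> u + t * \<phi> v"
      unfolding \<phi>_def using convex_onD[OF cf, of t] t by simp
  qed (simp)
  ultimately have "\<phi> 1 - \<phi> 0 \<ge> inner (grad c) (x - c) * (1 - 0)"
    by (intro convex_on_imp_above_tangent[where A=UNIV]) auto
  thus ?thesis unfolding \<phi>_def by simp
qed

lemma ereal_convex:
  assumes gc: "convex_fun_e g" and ga: "g a \<le> ereal ra" and gb: "g b \<le> ereal rb"
    and t: "0 \<le> t" "t \<le> 1"
  shows "g (t *\<^sub>R a + (1 - t) *\<^sub>R b) \<le> ereal (t * ra + (1 - t) * rb)"
proof -
  have "(a, ra) \<in> epigraph_e g" "(b, rb) \<in> epigraph_e g" using ga gb by (auto simp: epigraph_e_def)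
  hence "t *\<^sub>R (a, ra) + (1 - t) *\<^sub>R (b, rb) \<in> epigraph_e g"
    using gc t unfolding convex_fun_e_def by (intro convexD) auto
  thus ?thesis by (simp add: epigraph_e_def)
qed

lemma beta_bound:
  fixes b :: "nat \<Rightarrow> real" and c :: real
  assumes b0: "b 0 = 1" and bpos: "\<And>k. b k > 0" and c: "c \<ge> 0"
    and mono: "\<And>k. k \<ge> 1 \<Longrightarrow> b k \<le> b (k - 1)"
    and dec: "\<And>k. k \<ge> 1 \<Longrightarrow> b (k - 1) - b k \<ge> b (k - 1) * sqrt (b k) * c"
  shows "1 / sqrt (b k) \<ge> 1 + real k * c / 2"
proof (induction k)
  case 0 then show ?case using b0 by simp
next
  case (Suc k)
  define s where "s = sqrt (b (Suc k))"
  define t where "t = sqrt (b k)"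
  have s: "s > 0" and t: "t > 0" using bpos by (auto simp: s_def t_def)
  have st: "s \<le> t" using mono[of "Suc k"] by (simp add: s_def t_def)
  have "t\<^sup>2 - s\<^sup>2 \<ge> t\<^sup>2 * s * c" using dec[of "Suc k"] bpos[of k] bpos[of "Suc k"]
    by (simp add: s_def t_def less_imp_le)
  hence "(t - s) * (t + s) \<ge> t\<^sup>2 * s * c" by (simp add: power2_eq_square algebra_simps)
  moreover have "(t - s) * (t + s) \<le> (t - s) * (2 * t)" using st by (intro mult_left_mono) auto
  ultimately have "(t - s) * (2 * t) \<ge> t * t * s * c" by (simp add: power2_eq_square)
  hence "t * (2 * (t - s)) \<ge> t * (t * s * c)" by (simp add: algebra_simps)
  hence "2 * (t - s) \<ge> t * s * c" using t by (meson mult_left_le_imp_le)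
  hence "1 / s - 1 / t \<ge> c / 2" using s t by (simp add: field_simps)
  thus ?case using Suc.IH unfolding s_def t_def by (simp add: field_simps)
qed

lemma norm_id:
  fixes u y xk :: "'a::real_inner"
  shows "- (inner (y - xk) (u - xk)) + (norm (xk - y))\<^sup>2 / 2 = ((norm (u - y))\<^sup>2 - (norm (u - xk))\<^sup>2) / 2"
  by (simp add: power2_norm_eq_inner inner_diff_left inner_diff_right inner_commute field_simps)

lemma step:
  fixes f :: "'a::euclidean_space \<Rightarrow> real"
  assumes cf: "convex_on UNIV f"
    and fg: "\<And>z. (f has_derivative (\<lambda>h. inner (grad z) h)) (at z)"
    and prox: "inexact_prox grad g Lk eps y xk"
    and desc: "bregman f grad xk y \<le> B / 2 * (norm (xk - y))\<^sup>2"
    and Lk: "Lk = B + \<rho>" and rho: "\<rho> \<ge> 0"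
    and eps: "eps \<le> e + \<rho> / 2 * (norm (xk - y))\<^sup>2"
    and gu: "g u \<le> ereal gur" and gx: "g xk = ereal gxr"
  shows "f xk + gxr \<le> f u + gur + Lk / 2 * ((norm (u - y))\<^sup>2 - (norm (u - xk))\<^sup>2) + e"
proof -
  from prox obtain v where v: "v \<in> eps_subdiff g eps xk" and v0: "grad y - Lk *\<^sub>R (y - xk) + v = 0"
    unfolding inexact_prox_def by auto
  have "ereal (inner v (u - xk)) \<le> g u - g xk + ereal eps"
    using v gx unfolding eps_subdiff_def by auto
  also have "\<dots> \<le> ereal gur - ereal gxr + ereal eps" using gu gx by (intro add_right_mono ereal_minus_mono) auto
  finally have sg: "inner v (u - xk) \<le> gur - gxr + eps" by simp
  have vdef: "v = Lk *\<^sub>R (y - xk) - grad y" using v0 by (simp add: algebra_simps eq_neg_iff_add_eq_0)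
  have f1: "f xk \<le> f y + inner (grad y) (xk - y) + B / 2 * (norm (xk - y))\<^sup>2"
    using desc unfolding bregman_def by simp
  have f2: "f y + inner (grad y) (u - y) \<le> f u" by (rule grad_ineq[OF cf fg])
  have iv: "inner v (u - xk) = Lk * inner (y - xk) (u - xk) - inner (grad y) (u - xk)"
    unfolding vdef by (simp add: inner_diff_left)
  have lin: "inner (grad y) (u - y) = inner (grad y) (xk - y) + inner (grad y) (u - xk)"
    by (simp add: inner_diff_right)
  have "f xk + gxr \<le> f u + gur - Lk * inner (y - xk) (u - xk) + Lk / 2 * (norm (xk - y))\<^sup>2 + e"
  proof -
    have "Lk / 2 * (norm (xk - y))\<^sup>2 = B / 2 * (norm (xk - y))\<^sup>2 + \<rho> / 2 * (norm (xk - y))\<^sup>2"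
      using Lk by (simp add: algebra_simps)
    then show ?thesis using f1 f2 sg iv lin eps by linarith
  qed
  also have "\<dots> = f u + gur + Lk * (- (inner (y - xk) (u - xk)) + (norm (xk - y))\<^sup>2 / 2) + e"
    by (simp add: algebra_simps)
  also have "\<dots> = f u + gur + Lk / 2 * ((norm (u - y))\<^sup>2 - (norm (u - xk))\<^sup>2) + e"
    unfolding norm_id by simp
  finally show ?thesis .
qed

theorem theorem3p9:
  fixes f :: "'a::euclidean_space \<Rightarrow> real" and grad :: "'a \<Rightarrow> 'a" and L :: real
    and g :: "'a \<Rightarrow> ereal" and F :: "'a \<Rightarrow> ereal" and xbar :: 'a
    and B \<rho> Lk \<alpha> \<beta> \<epsilon> :: "nat \<Rightarrow> real" and Lmin Lmax E0 p :: real
    and xm1 xom1 :: 'a and y x xo :: "nat \<Rightarrow> 'a"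
  assumes f_convex: "convex_on UNIV f"
    and f_grad: "\<And>z. (f has_derivative (\<lambda>h. inner (grad z) h)) (at z)"
    and f_smooth: "lipschitz_smooth L f grad"
    and g_proper: "proper_fun g" and g_closed: "closed_fun_e g" and g_convex: "convex_fun_e g"
    and F_def: "\<And>z. F z = ereal (f z) + g z"
    and xbar_min: "\<And>z. F xbar \<le> F z"
    and B_pos: "\<And>k. B k > 0" and rho_nonneg: "\<And>k. \<rho> k \<ge> 0"
    and Lk_def: "\<And>k. Lk k = B k + \<rho> k"
    and Lmin_pos: "Lmin > 0" and Lmin_le_Lmax: "Lmin \<le> Lmax"
    and Lk_bounds: "\<And>k. Lmin \<le> Lk k \<and> Lk k \<le> Lmax"
    and alpha0: "\<alpha> 0 = 1"
    and alpha_range: "\<And>k. k \<ge> 1 \<Longrightarrow> 0 < \<alpha> k \<and> \<alpha> k \<le> 1"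
    and alpha_rec: "\<And>k. k \<ge> 1 \<Longrightarrow>
          1 - \<alpha> k = (\<alpha> k)\<^sup>2 * Lk k / ((\<alpha> (k - 1))\<^sup>2 * Lk (k - 1))"
    and beta0: "\<beta> 0 = 1"
    and beta_def: "\<And>k. k \<ge> 1 \<Longrightarrow>
          \<beta> k = (\<Prod>i = 1..k. max (1 - \<alpha> i) ((\<alpha> i)\<^sup>2 * Lk i / ((\<alpha> (i - 1))\<^sup>2 * Lk (i - 1))))"
    and E0_pos: "E0 > 0" and p_gt1: "p > 1"
    and y0: "y 0 = \<alpha> 0 *\<^sub>R xom1 + (1 - \<alpha> 0) *\<^sub>R xm1"
    and yk: "\<And>k. k \<ge> 1 \<Longrightarrow> y k = \<alpha> k *\<^sub>R xo (k - 1) + (1 - \<alpha> k) *\<^sub>R x (k - 1)"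
    and prox: "\<And>k. inexact_prox grad g (Lk k) (\<epsilon> k) (y k) (x k)"
    and descent: "\<And>k. bregman f grad (x k) (y k) \<le> B k / 2 * (norm (x k - y k))\<^sup>2"
    and xo0: "xo 0 = xm1 + (1 / \<alpha> 0) *\<^sub>R (x 0 - xm1)"
    and xok: "\<And>k. k \<ge> 1 \<Longrightarrow> xo k = x (k - 1) + (1 / \<alpha> k) *\<^sub>R (x k - x (k - 1))"
    and eps0: "\<epsilon> 0 = E0"
    and epsk: "\<And>k. k \<ge> 1 \<Longrightarrow>
          \<epsilon> k = E0 * \<beta> k * real k powr (- p) + \<rho> k / 2 * (norm (x k - y k))\<^sup>2"
  shows "(\<forall>k. F (x k) - F xbar + ereal ((\<alpha> k)\<^sup>2 * Lk k / 2 * (norm (xbar - xo k))\<^sup>2)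
            \<le> ereal ((Lk 0 / 2 * (norm (xbar - xom1))\<^sup>2
                       + E0 * (1 + (\<Sum>l = 1..k. real l powr (- p))))
                     / (1 + real k * sqrt (Lk 0) / (2 * sqrt Lmax))\<^sup>2))
         \<and> (\<exists>C. \<forall>k\<ge>1. F (x k) - F xbar \<le> ereal (C / (real k)\<^sup>2))"
proof -
  define xp where "xp k = (if k = 0 then xm1 else x (k - 1))" for k
  define xop where "xop k = (if k = 0 then xom1 else xo (k - 1))" for k
  have apos: "0 < \<alpha> k \<and> \<alpha> k \<le> 1" for k
    using alpha0 alpha_range[of k] by (cases "k = 0") auto
  have Lpos: "Lk k > 0" for k using Lk_bounds[of k] Lmin_pos by linarith
  have yk': "y k = \<alpha> k *\<^sub>R xop k + (1 - \<alpha> k) *\<^sub>R xp k" for k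
    using y0 yk[of k] by (cases "k = 0") (auto simp: xp_def xop_def)
  have xok': "xo k = xp k + (1 / \<alpha> k) *\<^sub>R (x k - xp k)" for k
    using xo0 xok[of k] by (cases "k = 0") (auto simp: xp_def)
  have xk_eq: "x k = \<alpha> k *\<^sub>R xo k + (1 - \<alpha> k) *\<^sub>R xp k" for k
  proof -
    have "\<alpha> k *\<^sub>R xo k = \<alpha> k *\<^sub>R xp k + (x k - xp k)"
      using apos[of k] by (simp add: xok'[of k] scaleR_add_right)
    thus ?thesis by (simp add: algebra_simps)
  qed
  have gx_ninf: "g (x k) \<noteq> \<infinity>" for k
    using prox[of k] unfolding inexact_prox_def eps_subdiff_def by (auto split: if_splits)
  have g_nminf: "g z \<noteq> -\<infinity>" for z using g_proper unfolding proper_fun_def by auto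
  define G where "G z = real_of_ereal (g z)" for z
  define Fr where "Fr z = f z + G z" for z
  have gx_fin: "g (x k) = ereal (G (x k))" for k
    using gx_ninf[of k] g_nminf[of "x k"] unfolding G_def by (cases "g (x k)") auto
  have gxbar_fin: "g xbar = ereal (G xbar)"
  proof -
    have "ereal (f xbar) + g xbar \<le> ereal (f (x 0)) + ereal (G (x 0))"
      using xbar_min[of "x 0"] F_def gx_fin[of 0] by metis
    hence "g xbar \<noteq> \<infinity>" by auto
    thus ?thesis using g_nminf[of xbar] unfolding G_def by (cases "g xbar") auto
  qed
  have Fx: "F (x k) = ereal (Fr (x k))" for k using F_def gx_fin unfolding Fr_def by simp
  have Fxbar: "F xbar = ereal (Fr xbar)" using F_def gxbar_fin unfolding Fr_def by simp
  define \<Phi> where "\<Phi> k = Fr (x k) - Fr xbar + (\<alpha> k)\<^sup>2 * Lk k / 2 * (norm (xbar - xo k))\<^sup>2" for k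
  define A where "A = Lk 0 / 2 * (norm (xbar - xom1))\<^sup>2"
  define N where "N k = A + E0 * (1 + (\<Sum>l = 1..k. real l powr (- p)))" for k
  have step0: "\<Phi> 0 \<le> A + E0"
  proof -
    have "f (x 0) + G (x 0) \<le> f xbar + G xbar + Lk 0 / 2 * ((norm (xbar - y 0))\<^sup>2 - (norm (xbar - x 0))\<^sup>2) + E0"
      by (rule step[OF f_convex f_grad prox[of 0] descent[of 0] Lk_def[of 0] rho_nonneg[of 0]])
        (use eps0 gxbar_fin gx_fin rho_nonneg[of 0] in auto)
    moreover have "y 0 = xom1" using yk'[of 0] alpha0 by (simp add: xop_def)
    moreover have "xo 0 = x 0" using xok'[of 0] alpha0 by simp
    ultimately show ?thesis unfolding \<Phi>_def A_def Fr_def using alpha0 by (simp add: algebra_simps)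
  qed
  have stepk: "\<Phi> k \<le> (1 - \<alpha> k) * \<Phi> (k - 1) + E0 * \<beta> k * real k powr (- p)" if k1: "k \<ge> 1" for k
  proof -
    define a where "a = \<alpha> k"
    have a: "0 < a" "a \<le> 1" using apos[of k] unfolding a_def by auto
    define u where "u = a *\<^sub>R xbar + (1 - a) *\<^sub>R x (k - 1)"
    define N1 where "N1 = (norm (xbar - xo (k - 1)))\<^sup>2"
    define N2 where "N2 = (norm (xbar - xo k))\<^sup>2"
    define e where "e = E0 * \<beta> k * real k powr (- p)"
    have gu: "g u \<le> ereal (a * G xbar + (1 - a) * G (x (k - 1)))"
      unfolding u_def using a gxbar_fin gx_fin[of "k - 1"] by (intro ereal_convex[OF g_convex]) auto
    have st: "f (x k) + G (x k) \<le> f u + (a * G xbar + (1 - a) * G (x (k - 1)))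
        + Lk k / 2 * ((norm (u - y k))\<^sup>2 - (norm (u - x k))\<^sup>2) + e"
      by (rule step[OF f_convex f_grad prox[of k] descent[of k] Lk_def[of k] rho_nonneg[of k] _ gu gx_fin[of k]])
        (simp add: epsk[OF k1] e_def)
    have fu: "f u \<le> a * f xbar + (1 - a) * f (x (k - 1))"
      using convex_onD[OF f_convex, of "1 - a" xbar "x (k - 1)"] a unfolding u_def by simp
    have uy: "u - y k = a *\<^sub>R (xbar - xo (k - 1))"
      unfolding u_def yk[OF k1] a_def by (simp add: algebra_simps)
    have ux: "u - x k = a *\<^sub>R (xbar - xo k)"
      using xk_eq[of k] k1 unfolding u_def a_def xp_def by (simp add: algebra_simps)
    have n1: "(norm (u - y k))\<^sup>2 = a\<^sup>2 * N1" unfolding uy N1_def using a by (simp add: power_mult_distrib)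
    have n2: "(norm (u - x k))\<^sup>2 = a\<^sup>2 * N2" unfolding ux N2_def using a by (simp add: power_mult_distrib)
    have rec: "a\<^sup>2 * Lk k = (1 - a) * ((\<alpha> (k - 1))\<^sup>2 * Lk (k - 1))"
      using alpha_rec[OF k1] apos[of "k - 1"] Lpos[of "k - 1"] unfolding a_def by (simp add: field_simps)
    have key: "Lk k / 2 * ((norm (u - y k))\<^sup>2 - (norm (u - x k))\<^sup>2)
        = (1 - a) * ((\<alpha> (k - 1))\<^sup>2 * Lk (k - 1) / 2 * N1) - a\<^sup>2 * Lk k / 2 * N2"
    proof -
      have "Lk k / 2 * ((norm (u - y k))\<^sup>2 - (norm (u - x k))\<^sup>2) = (a\<^sup>2 * Lk k) / 2 * N1 - a\<^sup>2 * Lk k / 2 * N2"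
        unfolding n1 n2 by (simp add: algebra_simps)
      also have "\<dots> = (1 - a) * ((\<alpha> (k - 1))\<^sup>2 * Lk (k - 1) / 2 * N1) - a\<^sup>2 * Lk k / 2 * N2"
        unfolding rec by (simp add: algebra_simps)
      finally show ?thesis .
    qed
    have P1: "(1 - a) * \<Phi> (k - 1) = (1 - a) * Fr (x (k - 1)) - (1 - a) * Fr xbar
        + (1 - a) * ((\<alpha> (k - 1))\<^sup>2 * Lk (k - 1) / 2 * N1)"
      unfolding \<Phi>_def N1_def by (simp add: algebra_simps)
    have P2: "\<Phi> k = Fr (x k) - Fr xbar + a\<^sup>2 * Lk k / 2 * N2"
      unfolding \<Phi>_def N2_def a_def by simp
    have P3: "(1 - a) * Fr (x (k - 1)) - (1 - a) * Fr xbar + Fr xbar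
        = a * f xbar + (1 - a) * f (x (k - 1)) + (a * G xbar + (1 - a) * G (x (k - 1)))"
      unfolding Fr_def by (simp add: algebra_simps)
    have P4: "Fr (x k) = f (x k) + G (x k)" unfolding Fr_def ..
    have "\<Phi> k \<le> (1 - a) * \<Phi> (k - 1) + e"
      using st fu key P1 P2 P3 P4 by linarith
    thus ?thesis unfolding a_def e_def .
  qed
  have beta_rec: "\<beta> k = \<beta> (k - 1) * (1 - \<alpha> k)" if k1: "k \<ge> 1" for k
  proof -
    define T where "T i = max (1 - \<alpha> i) ((\<alpha> i)\<^sup>2 * Lk i / ((\<alpha> (i - 1))\<^sup>2 * Lk (i - 1)))" for i
    have Ti: "T i = 1 - \<alpha> i" if "i \<ge> 1" for i using alpha_rec[OF that] unfolding T_def by simp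
    have bm: "\<beta> m = prod T {1..m}" for m
      using beta0 beta_def[of m] unfolding T_def by (cases "m = 0") auto
    obtain m where m: "k = Suc m" using k1 by (cases k) auto
    have "\<beta> k = prod T {1..m} * T (Suc m)" using bm[of k] m by simp
    thus ?thesis using bm[of m] Ti[of k] m by simp
  qed
  have one_m_alpha: "0 < 1 - \<alpha> k" if "k \<ge> 1" for k
  proof -
    have "0 < (\<alpha> k)\<^sup>2 * Lk k / ((\<alpha> (k - 1))\<^sup>2 * Lk (k - 1))"
      using apos[of k] apos[of "k - 1"] Lpos[of k] Lpos[of "k - 1"] by simp
    thus ?thesis using alpha_rec[OF that] by simp
  qed
  have beta_pos: "\<beta> k > 0" for k
  proof (induction k)
    case 0 then show ?case using beta0 by simp
  next
    case (Suc m) then show ?case using beta_rec[of "Suc m"] one_m_alpha[of "Suc m"] by simp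
  qed
  have beta_eq: "\<beta> k = (\<alpha> k)\<^sup>2 * Lk k / Lk 0" for k
  proof (induction k)
    case 0 then show ?case using beta0 alpha0 Lpos[of 0] by simp
  next
    case (Suc m)
    have "\<beta> (Suc m) = (\<alpha> m)\<^sup>2 * Lk m / Lk 0 * ((\<alpha> (Suc m))\<^sup>2 * Lk (Suc m) / ((\<alpha> m)\<^sup>2 * Lk m))"
      using beta_rec[of "Suc m"] alpha_rec[of "Suc m"] Suc.IH by simp
    also have "\<dots> = (\<alpha> (Suc m))\<^sup>2 * Lk (Suc m) / Lk 0"
      using apos[of m] Lpos[of m] by (simp add: field_simps)
    finally show ?case .
  qed
  have Phi_bound: "\<Phi> k \<le> \<beta> k * N k" for k
  proof (induction k)
    case 0 then show ?case using step0 beta0 unfolding N_def by simp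
  next
    case (Suc m)
    have om: "0 \<le> 1 - \<alpha> (Suc m)" using one_m_alpha[of "Suc m"] by simp
    have "\<Phi> (Suc m) \<le> (1 - \<alpha> (Suc m)) * \<Phi> m + E0 * \<beta> (Suc m) * real (Suc m) powr (- p)"
      using stepk[of "Suc m"] by simp
    also have "\<dots> \<le> (1 - \<alpha> (Suc m)) * (\<beta> m * N m) + E0 * \<beta> (Suc m) * real (Suc m) powr (- p)"
      using Suc.IH om by (intro add_right_mono mult_left_mono) auto
    also have "\<dots> = \<beta> (Suc m) * N (Suc m)"
    proof -
      have b: "\<beta> (Suc m) = \<beta> m * (1 - \<alpha> (Suc m))" using beta_rec[of "Suc m"] by simp
      show ?thesis unfolding N_def b by (simp add: algebra_simps)
    qed
    finally show ?case .
  qed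
  define c where "c = sqrt (Lk 0 / Lmax)"
  have Dk: "1 / sqrt (\<beta> k) \<ge> 1 + real k * c / 2" for k
  proof (rule beta_bound[where b=\<beta>, OF beta0 beta_pos])
    show "c \<ge> 0" unfolding c_def using Lpos[of 0] Lmin_pos Lmin_le_Lmax by simp
  next
    fix k :: nat assume k1: "k \<ge> 1"
    show "\<beta> k \<le> \<beta> (k - 1)" using beta_rec[OF k1] beta_pos[of "k - 1"] apos[of k]
      by (simp add: mult_left_le)
    have Lmaxpos: "Lmax > 0" using Lmin_pos Lmin_le_Lmax by linarith
    have "sqrt (\<beta> k) * c = sqrt (\<beta> k * Lk 0 / Lmax)" unfolding c_def
      by (simp add: real_sqrt_mult[symmetric] times_divide_eq_right)
    also have "\<dots> \<le> sqrt (\<beta> k * Lk 0 / Lk k)"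
      using beta_pos[of k] Lpos[of 0] Lpos[of k] Lk_bounds[of k]
      by (intro real_sqrt_le_mono divide_left_mono mult_pos_pos) auto
    also have "\<beta> k * Lk 0 / Lk k = (\<alpha> k)\<^sup>2"
      using beta_eq[of k] Lpos[of 0] Lpos[of k] by simp
    also have "sqrt ((\<alpha> k)\<^sup>2) = \<alpha> k" using apos[of k] by simp
    finally have ac: "sqrt (\<beta> k) * c \<le> \<alpha> k" .
    have "\<beta> (k - 1) - \<beta> k = \<beta> (k - 1) * \<alpha> k" using beta_rec[OF k1] by (simp add: algebra_simps)
    also have "\<dots> \<ge> \<beta> (k - 1) * (sqrt (\<beta> k) * c)"
      using ac beta_pos[of "k - 1"] by (intro mult_left_mono) auto
    finally show "\<beta> (k - 1) - \<beta> k \<ge> \<beta> (k - 1) * sqrt (\<beta> k) * c" by (simp add: mult.assoc)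
  qed
  have beta_D: "\<beta> k \<le> 1 / (1 + real k * sqrt (Lk 0) / (2 * sqrt Lmax))\<^sup>2" for k
  proof -
    have ceq: "real k * c / 2 = real k * sqrt (Lk 0) / (2 * sqrt Lmax)"
      unfolding c_def by (simp add: real_sqrt_divide)
    have c0: "c \<ge> 0" unfolding c_def using Lpos[of 0] Lmin_pos Lmin_le_Lmax by simp
    define D where "D = 1 + real k * c / 2"
    have Dpos: "D > 0" unfolding D_def using c0 by (simp add: add_pos_nonneg)
    have sb: "sqrt (\<beta> k) > 0" using beta_pos[of k] by simp
    have "D \<le> 1 / sqrt (\<beta> k)" using Dk[of k] unfolding D_def .
    hence "sqrt (\<beta> k) \<le> 1 / D" using sb Dpos by (simp add: field_simps)
    hence "(sqrt (\<beta> k))\<^sup>2 \<le> (1 / D)\<^sup>2" using sb by (intro power_mono) auto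
    hence "\<beta> k \<le> 1 / D\<^sup>2" using beta_pos[of k] by (simp add: power_divide)
    thus ?thesis unfolding D_def ceq .
  qed
  have Npos: "N k \<ge> 0" for k
    unfolding N_def A_def using Lpos[of 0] E0_pos
    by (intro add_nonneg_nonneg mult_nonneg_nonneg sum_nonneg) auto
  have part1: "\<Phi> k \<le> N k / (1 + real k * sqrt (Lk 0) / (2 * sqrt Lmax))\<^sup>2" for k
  proof -
    have "\<Phi> k \<le> \<beta> k * N k" by (rule Phi_bound)
    also have "\<dots> \<le> 1 / (1 + real k * sqrt (Lk 0) / (2 * sqrt Lmax))\<^sup>2 * N k"
      by (intro mult_right_mono beta_D Npos)
    finally show ?thesis by simp
  qed
  have summ: "summable (\<lambda>n. real n powr (- p))"
    using summable_real_powr_iff[of "- p"] p_gt1 by simp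
  define S where "S = (\<Sum>n. real n powr (- p))"
  have sumS: "(\<Sum>l = 1..k. real l powr (- p)) \<le> S" for k
    unfolding S_def by (rule sum_le_suminf[OF summ]) auto
  show ?thesis
  proof (intro conjI allI)
    fix k
    have "F (x k) - F xbar + ereal ((\<alpha> k)\<^sup>2 * Lk k / 2 * (norm (xbar - xo k))\<^sup>2) = ereal (\<Phi> k)"
      by (simp add: Fx Fxbar \<Phi>_def)
    then show "F (x k) - F xbar + ereal ((\<alpha> k)\<^sup>2 * Lk k / 2 * (norm (xbar - xo k))\<^sup>2)
            \<le> ereal ((Lk 0 / 2 * (norm (xbar - xom1))\<^sup>2
                       + E0 * (1 + (\<Sum>l = 1..k. real l powr (- p))))
                     / (1 + real k * sqrt (Lk 0) / (2 * sqrt Lmax))\<^sup>2)"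
      using part1[of k] by (simp add: N_def A_def)
  next
    define C where "C = (A + E0 * (1 + S)) * 4 * Lmax / Lk 0"
    show "\<exists>C. \<forall>k\<ge>1. F (x k) - F xbar \<le> ereal (C / (real k)\<^sup>2)"
    proof (intro exI allI impI)
      fix k :: nat assume k1: "k \<ge> 1"
      define D where "D = 1 + real k * sqrt (Lk 0) / (2 * sqrt Lmax)"
      define D0 where "D0 = real k * sqrt (Lk 0) / (2 * sqrt Lmax)"
      have Lmaxpos: "Lmax > 0" using Lmin_pos Lmin_le_Lmax by linarith
      have D0pos: "D0 > 0" unfolding D0_def using k1 Lpos[of 0] Lmaxpos by simp
      have DD0: "D0 \<le> D" unfolding D_def D0_def by simp
      have NS: "0 \<le> N k" "N k \<le> A + E0 * (1 + S)" using Npos[of k] sumS[of k] E0_pos unfolding N_def by auto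
      have "Fr (x k) - Fr xbar \<le> \<Phi> k"
        unfolding \<Phi>_def using apos[of k] Lpos[of k] by simp
      also have "\<dots> \<le> N k / D\<^sup>2" using part1[of k] unfolding D_def .
      also have "\<dots> \<le> N k / D0\<^sup>2"
        using D0pos DD0 NS by (intro divide_left_mono power_mono mult_pos_pos) auto
      also have "\<dots> \<le> (A + E0 * (1 + S)) / D0\<^sup>2"
        using NS by (intro divide_right_mono) auto
      also have "\<dots> = C / (real k)\<^sup>2"
        unfolding C_def D0_def using Lpos[of 0] Lmaxpos k1
        by (simp add: power_divide power_mult_distrib field_simps)
      finally show "F (x k) - F xbar \<le> ereal (C / (real k)\<^sup>2)" by (simp add: Fx Fxbar)
    qed
  qed
qed

end
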